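(* Let $M\in\mathbb{T}^{n\times n}$ and $q\in\mathbb{T}^n$ be such that no column of $M$ is the all-$(-\infty)$ vector and no entry of $q$ equals $-\infty$, and let $G=(V,E)$ be the associated colored bipartite multigraph. If $F\subset E$ is a perfect matching of $G$ containing at least one red edge, then $\alpha(F)$ is a solution of the TNECP instance $(M,q)$. Moreover, if the instance is nondegenerate, every solution of the TNECP instance is of the form $\alpha(F)$ for such a perfect matching $F$.
   Context: $\mathbb{T}=\mathbb{R}\cup\{-\infty\}$, $\oplus=\max$, $\odot=+$; convention $a-(-\infty)=+\infty$. TNECP instance $(M,q)$: find $(w,z)\in\mathbb{T}^n\times\mathbb{T}^n$ with $w\oplus M\odot z=q$, $\max_i(w_i+z_i)=-\infty$, and $z$ not the all-$(-\infty)$ vector. It is nondegenerate if for each $j$ the minimum $\min_k(q_k-M_{kj})$ is attained by exactly one $k$. The graph $G$ has row nodes $u_1,\dots,u_n$, column nodes $v_1,\dots,v_n$, a blue edge $u_iv_i$ for every $i$, and a red edge $u_iv_j$ whenever $q_i-M_{ij}=\min_k(q_k-M_{kj})$. For $F\subset E$, $\alpha(F)=(w,z)$ with $w_i=q_i$ if the blue edge $u_iv_i\in F$ and $-\infty$ otherwise, and $z_j=q_i-M_{ij}$ if a red edge $u_iv_j\in F$ and $-\infty$ otherwise. *)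

theory Defs
  imports "HOL-Library.Extended_Real"
begin

text \<open>Tropical semiring T = R \<union> {-\<infinity>} is modelled inside ereal: an element x is
  tropical iff x \<noteq> \<infinity>. max is tropical addition, + is tropical multiplication.
  Indices range over a finite type 'n (so n = CARD('n)).
  In ereal, a - (-\<infinity>) = \<infinity> for finite a, matching the paper's convention.\<close>

definition trop :: "ereal \<Rightarrow> bool" where
  "trop x \<longleftrightarrow> x \<noteq> \<infinity>"

definition colmin :: "('n::finite \<Rightarrow> 'n \<Rightarrow> ereal) \<Rightarrow> ('n \<Rightarrow> ereal) \<Rightarrow> 'n \<Rightarrow> ereal" where
  "colmin M q j = Min (range (\<lambda>k. q k - M k j))"

definition tnecp_solution ::
  "('n::finite \<Rightarrow> 'n \<Rightarrow> ereal) \<Rightarrow> ('n \<Rightarrow> ereal) \<Rightarrow> ('n \<Rightarrow> ereal) \<times> ('n \<Rightarrow> ereal) \<Rightarrow> bool" where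
  "tnecp_solution M q wz \<longleftrightarrow>
     (let w = fst wz; z = snd wz in
       (\<forall>i. trop (w i)) \<and> (\<forall>j. trop (z j)) \<and>
       (\<forall>i. max (w i) (Max (range (\<lambda>j. M i j + z j))) = q i) \<and>
       Max (range (\<lambda>i. w i + z i)) = -\<infinity> \<and>
       (\<exists>j. z j \<noteq> -\<infinity>))"

definition nondegenerate :: "('n::finite \<Rightarrow> 'n \<Rightarrow> ereal) \<Rightarrow> ('n \<Rightarrow> ereal) \<Rightarrow> bool" where
  "nondegenerate M q \<longleftrightarrow> (\<forall>j. \<exists>!k. q k - M k j = colmin M q j)"

text \<open>Edges of the colored bipartite multigraph: Blue i is u_i v_i, Red i j is u_i v_j.\<close>
datatype 'n edge = Blue 'n | Red 'n 'n

fun row_of :: "'n edge \<Rightarrow> 'n" where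
  "row_of (Blue i) = i" | "row_of (Red i j) = i"

fun col_of :: "'n edge \<Rightarrow> 'n" where
  "col_of (Blue i) = i" | "col_of (Red i j) = j"

fun is_red :: "'n edge \<Rightarrow> bool" where
  "is_red (Blue i) = False" | "is_red (Red i j) = True"

definition edges :: "('n::finite \<Rightarrow> 'n \<Rightarrow> ereal) \<Rightarrow> ('n \<Rightarrow> ereal) \<Rightarrow> 'n edge set" where
  "edges M q = range Blue \<union> {Red i j | i j. q i - M i j = colmin M q j}"

definition perfect_matching ::
  "('n::finite \<Rightarrow> 'n \<Rightarrow> ereal) \<Rightarrow> ('n \<Rightarrow> ereal) \<Rightarrow> 'n edge set \<Rightarrow> bool" where
  "perfect_matching M q F \<longleftrightarrow> F \<subseteq> edges M q \<and>
     (\<forall>i. \<exists>!e. e \<in> F \<and> row_of e = i) \<and>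
     (\<forall>j. \<exists>!e. e \<in> F \<and> col_of e = j)"

definition alpha ::
  "('n::finite \<Rightarrow> 'n \<Rightarrow> ereal) \<Rightarrow> ('n \<Rightarrow> ereal) \<Rightarrow> 'n edge set \<Rightarrow> ('n \<Rightarrow> ereal) \<times> ('n \<Rightarrow> ereal)" where
  "alpha M q F =
     ((\<lambda>i. if Blue i \<in> F then q i else -\<infinity>),
      (\<lambda>j. if \<exists>i. Red i j \<in> F then (let i = (SOME i. Red i j \<in> F) in q i - M i j) else -\<infinity>))"

end

theory Submission
  imports Defs
begin



lemma colmin_props:
  fixes M :: "'n::finite \<Rightarrow> 'n \<Rightarrow> ereal" and q :: "'n \<Rightarrow> ereal"
  assumes M_trop: "\<forall>i j. trop (M i j)"
    and q_fin: "\<forall>i. trop (q i) \<and> q i \<noteq> -\<infinity>"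
    and cols: "\<forall>j. \<exists>i. M i j \<noteq> -\<infinity>"
  shows "colmin M q j \<le> q k - M k j" "\<exists>k. colmin M q j = q k - M k j"
    "colmin M q j \<noteq> \<infinity>" "colmin M q j \<noteq> -\<infinity>"
proof -
  show 1: "colmin M q j \<le> q k - M k j" unfolding colmin_def by (rule Min_le) auto
  show 2: "\<exists>k. colmin M q j = q k - M k j" unfolding colmin_def
  proof -
    have "Min (range (\<lambda>k. q k - M k j)) \<in> range (\<lambda>k. q k - M k j)"
      by (rule Min_in) auto
    then show "\<exists>k. Min (range (\<lambda>k. q k - M k j)) = q k - M k j" by blast
  qed
  then obtain k0 where k0: "colmin M q j = q k0 - M k0 j" by blast
  obtain i where i: "M i j \<noteq> -\<infinity>" using cols by blast
  have "colmin M q j \<le> q i - M i j" unfolding colmin_def by (rule Min_le) auto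
  moreover have "q i - M i j \<noteq> \<infinity>" using i q_fin M_trop unfolding trop_def
    by (cases "q i"; cases "M i j") auto
  moreover have "q k0 - M k0 j \<noteq> -\<infinity>" using q_fin M_trop unfolding trop_def
    by (cases "q k0"; cases "M k0 j") auto
  ultimately show "colmin M q j \<noteq> \<infinity>" "colmin M q j \<noteq> -\<infinity>" using k0
    by auto
qed

lemma ereal_aux1:
  fixes a b c :: ereal
  assumes "a \<noteq> \<infinity>" "a \<noteq> -\<infinity>" "b \<noteq> \<infinity>" "c \<noteq> \<infinity>" "c \<noteq> -\<infinity>" "a - b = c"
  shows "b + c = a"
  using assms by (cases a; cases b; cases c) auto

lemma ereal_aux2:
  fixes a b c :: ereal
  assumes "a \<noteq> \<infinity>" "a \<noteq> -\<infinity>" "b \<noteq> \<infinity>" "c \<noteq> \<infinity>" "c \<noteq> -\<infinity>" "c \<le> a - b"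
  shows "b + c \<le> a"
  using assms by (cases a; cases b; cases c) auto

lemma part1:
  fixes M :: "'n::finite \<Rightarrow> 'n \<Rightarrow> ereal" and q :: "'n \<Rightarrow> ereal"
  assumes M_trop: "\<forall>i j. trop (M i j)"
    and q_fin: "\<forall>i. trop (q i) \<and> q i \<noteq> -\<infinity>"
    and cols: "\<forall>j. \<exists>i. M i j \<noteq> -\<infinity>"
    and pm: "perfect_matching M q F" and red: "\<exists>e\<in>F. is_red e"
  shows "tnecp_solution M q (alpha M q F)"
proof -
  note cp = colmin_props[OF M_trop q_fin cols]
  define w where "w = fst (alpha M q F)"
  define z where "z = snd (alpha M q F)"
  have sub: "F \<subseteq> edges M q" and rows: "\<forall>i. \<exists>!e. e \<in> F \<and> row_of e = i"
    and colsF: "\<forall>j. \<exists>!e. e \<in> F \<and> col_of e = j"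
    using pm unfolding perfect_matching_def by auto
  have w: "w i = (if Blue i \<in> F then q i else -\<infinity>)" for i
    unfolding w_def alpha_def by simp
  have zred: "z j = colmin M q j" if "Red i j \<in> F" for i j
  proof -
    have "(SOME i. Red i j \<in> F) = i"
    proof (rule some_equality)
      show "Red i j \<in> F" by fact
      fix i' assume "Red i' j \<in> F"
      then show "i' = i" using colsF that by (metis col_of.simps(2) edge.inject)
    qed
    moreover have "q i - M i j = colmin M q j" using that sub unfolding edges_def by auto
    ultimately show ?thesis using that unfolding z_def alpha_def by auto
  qed
  have znored: "z j = -\<infinity>" if "\<not> (\<exists>i. Red i j \<in> F)" for j
    using that unfolding z_def alpha_def by auto
  have zle: "M i j + z j \<le> q i" for i j
  proof (cases "\<exists>i. Red i j \<in> F")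
    case True
    then obtain i' where "Red i' j \<in> F" by blast
    then have "z j = colmin M q j" by (rule zred)
    moreover have "colmin M q j \<le> q i - M i j" by (rule cp(1))
    ultimately show ?thesis using q_fin M_trop cp(3)[of j] cp(4)[of j] ereal_aux2 unfolding trop_def
      by metis
  next
    case False then show ?thesis using znored[OF False] M_trop unfolding trop_def by (cases "M i j") auto
  qed
  have wle: "w i \<le> q i" for i using w by simp
  have ztrop: "trop (z j)" for j
    using zred znored cp(3) unfolding trop_def by (metis MInfty_neq_PInfty(1))
  have wtrop: "trop (w i)" for i using w q_fin by (simp add: trop_def)
  have eq: "max (w i) (Max (range (\<lambda>j. M i j + z j))) = q i" for i
  proof -
    have le: "Max (range (\<lambda>j. M i j + z j)) \<le> q i" using zle by (simp)
    obtain e where e: "e \<in> F" "row_of e = i" using rows by blast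
    show ?thesis
    proof (cases e)
      case (Blue x)
      then show ?thesis using e w le by auto
    next
      case (Red x j)
      then have x: "x = i" "Red i j \<in> F" using e by auto
      have zj: "z j = colmin M q j" using x(2) by (rule zred)
      have "Red i j \<in> edges M q" using x(2) sub by blast
      then have "q i - M i j = colmin M q j" unfolding edges_def by auto
      then have "M i j + z j = q i" using zj q_fin M_trop cp(3)[of j] cp(4)[of j] ereal_aux1 unfolding trop_def
        by metis
      moreover have "M i j + z j \<le> Max (range (\<lambda>j. M i j + z j))"
        by (rule Max_ge) auto
      ultimately have "q i \<le> Max (range (\<lambda>j. M i j + z j))" by simp
      then show ?thesis using le wle[of i] by (metis antisym max.absorb2 order.trans)
    qed
  qed
  have wz: "w i + z i = -\<infinity>" for i
  proof (cases "Blue i \<in> F")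
    case True
    have "\<not> (\<exists>k. Red k i \<in> F)"
    proof
      assume "\<exists>k. Red k i \<in> F"
      then obtain k where "Red k i \<in> F" by blast
      moreover have "col_of (Red k i) = i" "col_of (Blue i) = i" by simp_all
      ultimately show False using colsF True by (metis edge.distinct(1))
    qed
    then show ?thesis using znored wtrop unfolding trop_def by simp
  next
    case False then show ?thesis using w ztrop unfolding trop_def by simp
  qed
  have "range (\<lambda>i. w i + z i) = {-\<infinity>}" using wz by (simp only: wz) auto
  then have maxwz: "Max (range (\<lambda>i. w i + z i)) = -\<infinity>" by simp
  obtain e where "e \<in> F" "is_red e" using red by blast
  then obtain i j where "Red i j \<in> F" by (cases e) auto
  then have "z j \<noteq> -\<infinity>" using zred cp(4) by metis
  then show ?thesis unfolding tnecp_solution_def Let_def w_def[symmetric] z_def[symmetric]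
    using wtrop ztrop eq maxwz by blast
qed

lemma counting:
  fixes A A' B B' :: "'n::finite set" and kk :: "'n \<Rightarrow> 'n"
  assumes s1: "A' \<subseteq> A" and s2: "B' \<subseteq> B" and d: "A \<inter> B = {}"
    and cov: "UNIV \<subseteq> A' \<union> kk ` B'"
  shows "A' = A" "B' = B" "A \<union> B = UNIV" "inj_on kk B" "A \<inter> kk ` B = {}"
proof -
  let ?n = "card (UNIV :: 'n set)"
  have "?n \<le> card (A' \<union> kk ` B')" using cov by (simp add: card_mono)
  also have "\<dots> \<le> card A' + card (kk ` B')" by (rule card_Un_le)
  also have "\<dots> \<le> card A' + card B'" using card_image_le[of B' kk] by simp
  finally have c1: "?n \<le> card A' + card B'" .
  have c2: "card A + card B = card (A \<union> B)" using d by (simp add: card_Un_disjoint)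
  have c3: "card (A \<union> B) \<le> ?n" by (simp add: card_mono)
  have c4: "card A' \<le> card A" "card B' \<le> card B" using s1 s2 by (simp_all add: card_mono)
  have eA: "card A' = card A" and eB: "card B' = card B" using c1 c2 c3 c4 by linarith+
  show "A' = A" using card_subset_eq[OF _ s1 eA] by simp
  show "B' = B" using card_subset_eq[OF _ s2 eB] by simp
  have "card (A \<union> B) = ?n" using c1 c2 c3 c4 by linarith
  then show "A \<union> B = UNIV" using card_subset_eq[of UNIV "A \<union> B"] by simp
  have "card (A' \<union> kk ` B') = ?n" using cov by (simp add: card_mono antisym)
  have ckB: "card (kk ` B) \<le> card B" by (simp add: card_image_le)
  have cov2: "UNIV \<subseteq> A \<union> kk ` B" using cov s1 s2 by blast
  have "A \<union> kk ` B = UNIV" using cov2 by blast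
  then have c5: "?n \<le> card A + card (kk ` B)"
    using card_Un_le[of A "kk ` B"] by simp
  have "card (kk ` B) = card B" using c5 ckB c2 c3 by linarith
  then show "inj_on kk B" by (simp add: eq_card_imp_inj_on)
  have "card (A \<union> kk ` B) = ?n" using cov2 by (simp add: card_mono antisym)
  moreover have "card A + card (kk ` B) = card (A \<union> kk ` B) + card (A \<inter> kk ` B)"
    by (rule card_Un_Int) auto
  ultimately have "card (A \<inter> kk ` B) = 0" using c5 ckB c2 c3 by linarith
  then show "A \<inter> kk ` B = {}" by simp
qed

lemma ereal_aux3:
  fixes a b c :: ereal
  assumes "a \<noteq> \<infinity>" "a \<noteq> -\<infinity>" "b \<noteq> \<infinity>" "c \<noteq> \<infinity>" "b + c \<le> a"
  shows "c \<le> a - b"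
  using assms by (cases a; cases b; cases c) auto

lemma ereal_aux4:
  fixes a b c :: ereal
  assumes "a \<noteq> \<infinity>" "a \<noteq> -\<infinity>" "b \<noteq> \<infinity>" "c \<noteq> \<infinity>" "b + c = a"
  shows "c \<noteq> -\<infinity>" "c = a - b"
  using assms by (cases a; cases b; cases c; auto)+

lemma ereal_aux5:
  fixes b c :: ereal
  assumes "b \<noteq> \<infinity>" "c \<noteq> \<infinity>" "b \<noteq> -\<infinity>" "c \<noteq> -\<infinity>"
  shows "b + c \<noteq> -\<infinity>"
  using assms by (cases b; cases c) auto

lemma part2:
  fixes M :: "'n::finite \<Rightarrow> 'n \<Rightarrow> ereal" and q :: "'n \<Rightarrow> ereal"
  assumes M_trop: "\<forall>i j. trop (M i j)"
    and q_fin: "\<forall>i. trop (q i) \<and> q i \<noteq> -\<infinity>"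
    and cols: "\<forall>j. \<exists>i. M i j \<noteq> -\<infinity>"
    and nd: "nondegenerate M q" and sol: "tnecp_solution M q (w, z)"
  shows "\<exists>F. perfect_matching M q F \<and> (\<exists>e\<in>F. is_red e) \<and> (w, z) = alpha M q F"
proof -
  note cp = colmin_props[OF M_trop q_fin cols]
  have qi: "q i \<noteq> \<infinity>" "q i \<noteq> -\<infinity>" for i using q_fin unfolding trop_def by auto
  have Mi: "M i j \<noteq> \<infinity>" for i j using M_trop unfolding trop_def by auto
  have wtrop: "w i \<noteq> \<infinity>" for i
    using sol unfolding tnecp_solution_def trop_def by auto
  have ztrop: "z j \<noteq> \<infinity>" for j
    using sol unfolding tnecp_solution_def trop_def by auto
  have row: "max (w i) (Max (range (\<lambda>j. M i j + z j))) = q i" for i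
    using sol unfolding tnecp_solution_def by auto
  have mwz: "Max (range (\<lambda>i. w i + z i)) = -\<infinity>"
    using sol unfolding tnecp_solution_def by auto
  have ex: "\<exists>j. z j \<noteq> -\<infinity>"
    using sol unfolding tnecp_solution_def by auto
  have wz: "w i + z i = -\<infinity>" for i
  proof -
    have "w i + z i \<le> Max (range (\<lambda>i. w i + z i))" by (rule Max_ge) auto
    then show ?thesis using mwz by simp
  qed
  have zle: "M k j + z j \<le> q k" for k j
  proof -
    have "M k j + z j \<le> Max (range (\<lambda>j. M k j + z j))" by (rule Max_ge) auto
    also have "\<dots> \<le> q k" using row[of k] by (metis max.cobounded2)
    finally show ?thesis .
  qed
  have wle: "w i \<le> q i" for i using row[of i] by (metis max.cobounded1)
  have zc: "z j \<le> colmin M q j" for j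
  proof -
    obtain k where k: "colmin M q j = q k - M k j" using cp(2) by blast
    show ?thesis unfolding k by (rule ereal_aux3[OF qi(1) qi(2) Mi ztrop zle])
  qed
  define kk where "kk j = (THE k. q k - M k j = colmin M q j)" for j
  have kk1: "q (kk j) - M (kk j) j = colmin M q j" for j
    using nd unfolding nondegenerate_def kk_def by (metis (mono_tags, lifting) theI')
  have kk2: "k = kk j" if "q k - M k j = colmin M q j" for k j
    using nd that kk1 unfolding nondegenerate_def by metis
  have cover: "w i = q i \<or> (\<exists>j. z j \<noteq> -\<infinity> \<and> z j = colmin M q j \<and> kk j = i)" for i
  proof (cases "w i = q i")
    case False
    let ?m = "Max (range (\<lambda>j. M i j + z j))"
    have "?m = q i" using row[of i] False by (metis max_def)
    moreover have "?m \<in> range (\<lambda>j. M i j + z j)" by (rule Max_in) auto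
    ultimately obtain j where j: "M i j + z j = q i" by (metis (no_types, lifting) imageE)
    have zn: "z j \<noteq> -\<infinity>" and ze: "z j = q i - M i j"
      using ereal_aux4[OF qi(1) qi(2) Mi ztrop j] by auto
    have "z j = colmin M q j" using zc[of j] cp(1)[of j i] ze by (metis antisym)
    moreover then have "kk j = i" using kk2 ze by metis
    ultimately show ?thesis using zn by blast
  qed simp
  define A where "A = {i. w i \<noteq> -\<infinity>}"
  define B where "B = {j. z j \<noteq> -\<infinity>}"
  define A' where "A' = {i. w i = q i}"
  define B' where "B' = {j. z j \<noteq> -\<infinity> \<and> z j = colmin M q j}"
  have s1: "A' \<subseteq> A" unfolding A'_def A_def using qi(2) by force
  have s2: "B' \<subseteq> B" unfolding B'_def B_def by auto
  have d: "A \<inter> B = {}" unfolding A_def B_def using wz ereal_aux5 wtrop ztrop by blast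
  have cov: "UNIV \<subseteq> A' \<union> kk ` B'" unfolding A'_def B'_def using cover by blast
  note cnt = counting[OF s1 s2 d cov]
  define ed where "ed j = (if j \<in> A then Blue j else Red (kk j) j)" for j
  define F where "F = range ed"
  have wA: "w i = q i" if "i \<in> A" for i using that cnt(1) unfolding A'_def by blast
  have zB: "z j = colmin M q j" if "j \<in> B" for j using that cnt(2) unfolding B'_def by blast
  have colE: "col_of (ed j) = j" for j unfolding ed_def by simp
  have ginj: "j1 = j2" if "row_of (ed j1) = row_of (ed j2)" for j1 j2
  proof -
    have AB: "j \<in> A \<or> j \<in> B" for j using cnt(3) by blast
    show ?thesis
    proof (cases "j1 \<in> A"; cases "j2 \<in> A")
      assume "j1 \<notin> A" "j2 \<notin> A"
      then show ?thesis using that AB cnt(4) unfolding ed_def by (auto simp: inj_on_def)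
    next
      assume "j1 \<in> A" "j2 \<notin> A"
      then show ?thesis using that AB cnt(5) unfolding ed_def by auto
    next
      assume "j1 \<notin> A" "j2 \<in> A"
      then show ?thesis using that AB cnt(5) unfolding ed_def by auto
    qed (use that in \<open>auto simp: ed_def\<close>)
  qed
  have gsurj: "\<exists>j. row_of (ed j) = i" for i
  proof -
    have "i \<in> A \<union> kk ` B" using cov cnt(1,2) by blast
    then show ?thesis using d unfolding ed_def by auto
  qed
  have pm: "perfect_matching M q F"
    unfolding perfect_matching_def
  proof (intro conjI allI)
    show "F \<subseteq> edges M q" unfolding F_def edges_def ed_def using kk1 by auto
  next
    fix i
    obtain j where j: "row_of (ed j) = i" using gsurj by blast
    show "\<exists>!e. e \<in> F \<and> row_of e = i"
    proof (rule ex1I[of _ "ed j"])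
      show "ed j \<in> F \<and> row_of (ed j) = i" using j unfolding F_def by simp
      fix e assume "e \<in> F \<and> row_of e = i"
      then obtain j' where "e = ed j'" "row_of (ed j') = i" unfolding F_def by blast
      then show "e = ed j" using ginj j by metis
    qed
  next
    fix j
    show "\<exists>!e. e \<in> F \<and> col_of e = j"
    proof (rule ex1I[of _ "ed j"])
      show "ed j \<in> F \<and> col_of (ed j) = j" using colE unfolding F_def by simp
      fix e assume "e \<in> F \<and> col_of e = j"
      then obtain j' where "e = ed j'" "col_of (ed j') = j" unfolding F_def by blast
      then show "e = ed j" using colE by metis
    qed
  qed
  have red: "\<exists>e\<in>F. is_red e"
  proof -
    obtain j where "z j \<noteq> -\<infinity>" using ex by blast
    then have "j \<in> B" "j \<notin> A" using d unfolding B_def by auto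
    then show ?thesis unfolding F_def ed_def by (intro bexI[of _ "ed j"]) (auto simp: ed_def)
  qed
  have blue: "Blue i \<in> F \<longleftrightarrow> i \<in> A" for i
    unfolding F_def ed_def by (auto split: if_splits)
  have redF: "Red i j \<in> F \<longleftrightarrow> j \<notin> A \<and> i = kk j" for i j
    unfolding F_def ed_def by (auto split: if_splits)
  have "w = fst (alpha M q F)"
  proof
    fix i
    have fa: "fst (alpha M q F) i = (if Blue i \<in> F then q i else -\<infinity>)" unfolding alpha_def by simp
    show "w i = fst (alpha M q F) i"
    proof (cases "i \<in> A")
      case True then show ?thesis using fa blue[of i] wA[of i] by simp
    next
      case False then show ?thesis using fa blue[of i] unfolding A_def by simp
    qed
  qed
  moreover have "z = snd (alpha M q F)"
  proof
    fix j
    show "z j = snd (alpha M q F) j"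
    proof (cases "j \<in> A")
      case True
      then have "j \<notin> B" using d by blast
      then have "z j = -\<infinity>" unfolding B_def by simp
      moreover have "\<not> (\<exists>i. Red i j \<in> F)" using True redF by simp
      ultimately show ?thesis unfolding alpha_def by simp
    next
      case False
      then have jB: "j \<in> B" using cnt(3) by blast
      have "(SOME i. Red i j \<in> F) = kk j" using redF False by simp
      moreover have "\<exists>i. Red i j \<in> F" using redF False by simp
      ultimately show ?thesis using zB[OF jB] kk1[of j] unfolding alpha_def Let_def by simp
    qed
  qed
  ultimately show ?thesis using pm red by (metis prod.collapse)
qed


theorem lemma3p2:
  fixes M :: "'n::finite \<Rightarrow> 'n \<Rightarrow> ereal" and q :: "'n \<Rightarrow> ereal"
  assumes M_trop: "\<forall>i j. trop (M i j)"
    and q_fin: "\<forall>i. trop (q i) \<and> q i \<noteq> -\<infinity>"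
    and cols: "\<forall>j. \<exists>i. M i j \<noteq> -\<infinity>"
  shows "(\<forall>F. perfect_matching M q F \<and> (\<exists>e\<in>F. is_red e) \<longrightarrow> tnecp_solution M q (alpha M q F))
       \<and> (nondegenerate M q \<longrightarrow>
            (\<forall>w z. tnecp_solution M q (w, z) \<longrightarrow>
               (\<exists>F. perfect_matching M q F \<and> (\<exists>e\<in>F. is_red e) \<and> (w, z) = alpha M q F)))"
  using part1[OF M_trop q_fin cols] part2[OF M_trop q_fin cols] by blast

end
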